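(* Let $W\ge1$ be an integer, let $\mathcal H$ be a real Hilbert space of dimension $d\in\{1,2,\ldots\}\cup\{\infty\}$ with $W<d$, and let $\Phi:\mathbb R^W\to\mathcal H$ be differentiable with Lipschitz-continuous differential. Then $\mathcal H\setminus F_\Phi$ is dense in $\mathcal H$.
   Context: For a target $\mathbf f\in\mathcal H$, let $L_{\mathbf f}(\mathbf w)=\frac12\|\mathbf f-\Phi(\mathbf w)\|^2_{\mathcal H}$ and let $\mathbf w(t)$, $t\ge0$, be the solution of the gradient flow $\frac{d\mathbf w}{dt}=-\nabla_{\mathbf w}L_{\mathbf f}(\mathbf w(t))$ with $\mathbf w(0)=\mathbf 0$. The set of GF-learnable targets is $F_\Phi=\{\mathbf f\in\mathcal H:\inf_{t\ge0}L_{\mathbf f}(\mathbf w(t))=0\}$. *)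

theory Defs
  imports "HOL-Analysis.Analysis"
begin

definition gf_loss :: "('w \<Rightarrow> 'h::real_normed_vector) \<Rightarrow> 'h \<Rightarrow> 'w \<Rightarrow> real" where
  "gf_loss Phi f w = (1/2) * (norm (f - Phi w))^2"

definition gf_solution ::
  "(real^'n \<Rightarrow> 'h::real_normed_vector) \<Rightarrow> 'h \<Rightarrow> (real \<Rightarrow> real^'n) \<Rightarrow> bool" where
  "gf_solution Phi f w \<longleftrightarrow> w 0 = 0 \<and>
     (\<forall>t\<ge>0. \<exists>g. (gf_loss Phi f has_derivative (\<lambda>v. g \<bullet> v)) (at (w t)) \<and>
                 (w has_vector_derivative (- g)) (at t within {0..}))"

definition gf_learnable :: "(real^'n \<Rightarrow> 'h::real_normed_vector) \<Rightarrow> 'h set" where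
  "gf_learnable Phi = {f. \<forall>w. gf_solution Phi f w \<longrightarrow> (INF t\<in>{0..}. gf_loss Phi f (w t)) = 0}"

end

theory Submission
  imports Defs "HOL-Analysis.Analysis"
begin


lemma gronwall:
  fixes D :: "real \<Rightarrow> real"
  assumes cont: "continuous_on {0..T} D" and K: "0 \<le> K"
    and le: "\<And>t. t \<in> {0..T} \<Longrightarrow> D t \<le> a + K * integral {0..t} D"
    and t: "t \<in> {0..T}"
  shows "D t \<le> a * exp (K * t)"
proof -
  define I where "I s = integral {0..s} D" for s
  have dI: "(I has_real_derivative D s) (at s within {0..T})" if "s \<in> {0..T}" for s
    unfolding I_def by (rule integral_has_real_derivative[OF cont that])
  have cI: "continuous_on {0..T} I"
    using dI by (meson DERIV_continuous continuous_on_eq_continuous_within)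
  define J where "J s = exp (- (K * s)) * (a + K * I s)" for s
  have "J t \<le> J 0"
  proof (rule DERIV_nonpos_imp_decreasing_open[of 0 t J])
    show "0 \<le> t" using t by auto
    show "continuous_on {0..t} J" unfolding J_def
      using t by (intro continuous_intros continuous_on_subset[OF cI]) auto
    fix s assume s: "0 < s" "s < t"
    then have sT: "s \<in> interior {0..T}" using t by auto
    have "(I has_real_derivative D s) (at s)"
      using dI[of s] sT at_within_interior[OF sT] s t by auto
    then have "(J has_real_derivative (- K * exp (- (K * s)) * (a + K * I s) + exp (- (K * s)) * (K * D s))) (at s)"
      unfolding J_def by (auto intro!: derivative_eq_intros)
    moreover have "-K * exp (- (K * s)) * (a + K * I s) + exp (- (K * s)) * (K * D s) = K * exp (- (K * s)) * (D s - (a + K * I s))"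
      by (simp add: algebra_simps)
    moreover have "K * exp (- (K * s)) * (D s - (a + K * I s)) \<le> 0"
      using le[of s] s t K by (intro mult_nonneg_nonpos) (auto simp: I_def)
    ultimately show "\<exists>y. (J has_real_derivative y) (at s) \<and> y \<le> 0" by auto
  qed
  then have "exp (- (K * t)) * (a + K * I t) \<le> a" by (simp add: J_def I_def)
  then have "a + K * I t \<le> a * exp (K * t)"
    by (simp add: exp_minus field_simps)
  then show ?thesis using le[OF t] by (simp add: I_def)
qed

lemma ode_compare:
  fixes G1 G2 :: "'a::euclidean_space \<Rightarrow> 'a" and X1 X2 :: "real \<Rightarrow> 'a"
  assumes c1: "continuous_on {0..T} X1" and c2: "continuous_on {0..T} X2"
    and gc1: "continuous_on UNIV G1" and gc2: "continuous_on UNIV G2"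
    and e1: "\<And>t. t \<in> {0..T} \<Longrightarrow> X1 t = integral {0..t} (\<lambda>s. G1 (X1 s))"
    and e2: "\<And>t. t \<in> {0..T} \<Longrightarrow> X2 t = integral {0..t} (\<lambda>s. G2 (X2 s))"
    and lip: "\<And>x y. norm (G1 x - G1 y) \<le> K * norm (x - y)" and K: "0 \<le> K"
    and eta: "\<And>x. norm (G1 x - G2 x) \<le> \<eta>"
    and t: "t \<in> {0..T}"
  shows "norm (X1 t - X2 t) \<le> \<eta> * T * exp (K * t)"
proof -
  define D where "D s = norm (X1 s - X2 s)" for s
  have eta0: "0 \<le> \<eta>" using eta[of 0] norm_ge_zero order_trans by blast
  have cD: "continuous_on {0..T} D" unfolding D_def by (intro continuous_intros c1 c2)
  have "D t \<le> (\<eta> * T) * exp (K * t)"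
  proof (rule gronwall[OF cD K _ t])
    fix s assume s: "s \<in> {0..T}"
    have sub: "{0..s} \<subseteq> {0..T}" using s by auto
    have cg1: "continuous_on {0..s} (\<lambda>u. G1 (X1 u))"
      by (rule continuous_on_compose2[OF gc1 continuous_on_subset[OF c1 sub]]) auto
    have cg2: "continuous_on {0..s} (\<lambda>u. G2 (X2 u))"
      by (rule continuous_on_compose2[OF gc2 continuous_on_subset[OF c2 sub]]) auto
    have cDs: "continuous_on {0..s} D" by (rule continuous_on_subset[OF cD sub])
    have i1: "(\<lambda>u. G1 (X1 u)) integrable_on {0..s}" by (rule integrable_continuous_real[OF cg1])
    have i2: "(\<lambda>u. G2 (X2 u)) integrable_on {0..s}" by (rule integrable_continuous_real[OF cg2])
    have iD: "D integrable_on {0..s}" by (rule integrable_continuous_real[OF cDs])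
    have "D s = norm (integral {0..s} (\<lambda>u. G1 (X1 u) - G2 (X2 u)))"
      unfolding D_def using e1[OF s] e2[OF s] integral_diff[OF i1 i2] by simp
    also have "\<dots> \<le> integral {0..s} (\<lambda>u. K * D u + \<eta>)"
    proof (rule integral_norm_bound_integral)
      show "(\<lambda>u. G1 (X1 u) - G2 (X2 u)) integrable_on {0..s}" using i1 i2 by (rule integrable_diff)
      show "(\<lambda>u. K * D u + \<eta>) integrable_on {0..s}"
        by (intro integrable_add integrable_const_ivl) (rule integrable_on_mult_right[OF iD])
      fix u assume u: "u \<in> {0..s}"
      have "norm (G1 (X1 u) - G2 (X2 u)) \<le> norm (G1 (X1 u) - G1 (X2 u)) + norm (G1 (X2 u) - G2 (X2 u))"
        using norm_triangle_ineq[of "G1 (X1 u) - G1 (X2 u)" "G1 (X2 u) - G2 (X2 u)"] by simp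
      also have "\<dots> \<le> K * D u + \<eta>" unfolding D_def by (intro add_mono lip eta)
      finally show "norm (G1 (X1 u) - G2 (X2 u)) \<le> K * D u + \<eta>" .
    qed
    also have "\<dots> = K * integral {0..s} D + \<eta> * s"
    proof -
      have "integral {0..s} (\<lambda>u. K * D u + \<eta>) = integral {0..s} (\<lambda>u. K * D u) + integral {0..s} (\<lambda>u. \<eta>)"
        by (rule integral_add[OF integrable_on_mult_right[OF iD] integrable_const_ivl])
      also have "integral {0..s} (\<lambda>u. K * D u) = K * integral {0..s} D" by (rule integral_mult_right)
      also have "integral {0..s} (\<lambda>u. \<eta>) = \<eta> * s" using s by simp
      finally show ?thesis .
    qed
    also have "\<dots> \<le> \<eta> * T + K * integral {0..s} D"
      using s eta0 mult_left_mono[of s T \<eta>] by simp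
    finally show "D s \<le> \<eta> * T + K * integral {0..s} D" .
  qed
  then show ?thesis by (simp add: D_def)
qed

lemma at_within_Ici_eq:
  fixes t :: real
  assumes "0 \<le> t" "t < b"
  shows "at t within {0..b} = at t within {0..}"
  by (rule at_within_nhd[of _ "{..<b}"]) (use assms in auto)

lemma indef_deriv:
  fixes h :: "real \<Rightarrow> 'a::banach"
  assumes "continuous_on {0..} h" "0 \<le> t"
  shows "((\<lambda>u. integral {0..u} h) has_vector_derivative h t) (at t within {0..})"
proof -
  have "((\<lambda>u. integral {0..u} h) has_vector_derivative h t) (at t within {0..t+1})"
    by (rule integral_has_vector_derivative) (use assms in \<open>auto intro: continuous_on_subset\<close>)
  then show ?thesis using at_within_Ici_eq[of t "t+1"] assms by simp
qed

lemma indef_cont: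
  fixes h :: "real \<Rightarrow> 'a::banach"
  assumes "continuous_on {0..} h"
  shows "continuous_on {0..} (\<lambda>u. integral {0..u} h)"
  unfolding continuous_on_eq_continuous_within
proof
  fix t :: real assume "t \<in> {0..}"
  then show "continuous (at t within {0..}) (\<lambda>u. integral {0..u} h)"
    by (intro has_vector_derivative_continuous[OF indef_deriv[OF assms]]) auto
qed

lemma has_integral_pow0:
  assumes "0 \<le> t"
  shows "((\<lambda>s::real. s ^ k) has_integral t ^ Suc k / Suc k) {0..t}"
proof -
  have "((\<lambda>s::real. s ^ k) has_integral ((\<lambda>s. s ^ Suc k / Suc k) t - (\<lambda>s. s ^ Suc k / Suc k) 0)) {0..t}"
  proof (rule fundamental_theorem_of_calculus[OF assms])
    fix s :: real assume "s \<in> {0..t}"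
    have "((\<lambda>s. s ^ Suc k / real (Suc k)) has_real_derivative (real (Suc k) * s ^ (Suc k - Suc 0)) / real (Suc k)) (at s within {0..t})"
      by (intro DERIV_cdivide DERIV_pow)
    then show "((\<lambda>s. s ^ Suc k / real (Suc k)) has_vector_derivative s ^ k) (at s within {0..t})"
      by (simp add: has_real_derivative_iff_has_vector_derivative[symmetric] del: of_nat_Suc)
  qed
  then show ?thesis by simp
qed

fun picard :: "('a::euclidean_space \<Rightarrow> 'a) \<Rightarrow> nat \<Rightarrow> real \<Rightarrow> 'a" where
  "picard G 0 = (\<lambda>t. 0)"
| "picard G (Suc n) = (\<lambda>t. integral {0..t} (\<lambda>s. G (picard G n s)))"

lemma picard_exists:
  fixes G :: "'a::euclidean_space \<Rightarrow> 'a"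
  assumes lip: "\<And>x y. norm (G x - G y) \<le> K * norm (x - y)" and K0: "0 \<le> K"
    and bnd: "\<And>x. norm (G x) \<le> M"
  shows "\<exists>X::real \<Rightarrow> 'a. X 0 = 0 \<and> continuous_on {0..} X \<and> (\<forall>t\<ge>0. X t = integral {0..t} (\<lambda>s. G (X s)))"
proof -
  define x where "x = picard G"
  have M0: "0 \<le> M" using bnd[of 0] norm_ge_zero order_trans by blast
  have cG: "continuous_on UNIV G"
    by (rule lipschitz_on_continuous_on[of K]) (rule lipschitz_onI, use lip K0 in \<open>auto simp: dist_norm\<close>)
  have cx: "continuous_on {0..} (x n)" for n
  proof (induction n)
    case 0 then show ?case by (simp add: x_def)
  next
    case (Suc n)
    have "continuous_on {0..} (\<lambda>s. G (x n s))"
      by (rule continuous_on_compose2[OF cG Suc]) auto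
    then show ?case unfolding x_def picard.simps by (rule indef_cont[unfolded x_def])
  qed
  have ix: "(\<lambda>s. G (x n s)) integrable_on {0..t}" for n t
    by (rule integrable_continuous_real, rule continuous_on_compose2[OF cG continuous_on_subset[OF cx[of n]]]) auto
  have xS: "x (Suc n) t = integral {0..t} (\<lambda>s. G (x n s))" for n t by (simp add: x_def)
  have est: "norm (x (Suc n) t - x n t) \<le> M * K ^ n * t ^ Suc n / fact (Suc n)" if t: "0 \<le> t" for n t
    using t
  proof (induction n arbitrary: t)
    case 0
    have "norm (x (Suc 0) t - x 0 t) = norm (integral {0..t} (\<lambda>s. G 0))" by (simp add: x_def)
    also have "\<dots> \<le> integral {0..t} (\<lambda>s. M)"
      by (rule integral_norm_bound_integral) (auto intro: bnd)
    also have "\<dots> = M * t" using 0 by simp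
    finally show ?case by (simp add: mult.commute)
  next
    case (Suc n)
    have "x (Suc (Suc n)) t - x (Suc n) t = integral {0..t} (\<lambda>s. G (x (Suc n) s)) - integral {0..t} (\<lambda>s. G (x n s))"
      by (rule arg_cong2[where f="(-)"]; rule xS)
    then have "norm (x (Suc (Suc n)) t - x (Suc n) t) = norm (integral {0..t} (\<lambda>s. G (x (Suc n) s) - G (x n s)))"
      by (simp add: integral_diff[OF ix ix])
    also have "\<dots> \<le> integral {0..t} (\<lambda>s. (K * (M * K ^ n / fact (Suc n))) * s ^ Suc n)"
    proof (rule integral_norm_bound_integral)
      show "(\<lambda>s. G (x (Suc n) s) - G (x n s)) integrable_on {0..t}" by (intro integrable_diff ix)
      show "(\<lambda>s. (K * (M * K ^ n / fact (Suc n))) * s ^ Suc n) integrable_on {0..t}"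
        using has_integral_pow0[OF Suc.prems, of "Suc n"] by (intro integrable_on_mult_right) blast
      fix s assume s: "s \<in> {0..t}"
      have "norm (G (x (Suc n) s) - G (x n s)) \<le> K * norm (x (Suc n) s - x n s)" by (rule lip)
      also have "\<dots> \<le> K * (M * K ^ n * s ^ Suc n / fact (Suc n))"
        using Suc.IH[of s] s K0 by (intro mult_left_mono) auto
      finally show "norm (G (x (Suc n) s) - G (x n s)) \<le> (K * (M * K ^ n / fact (Suc n))) * s ^ Suc n"
        by simp
    qed
    also have "\<dots> = (K * (M * K ^ n / fact (Suc n))) * (t ^ Suc (Suc n) / Suc (Suc n))"
      using has_integral_pow0[OF Suc.prems, of "Suc n"] by (simp add: integral_mult_right integral_unique)
    also have "\<dots> = M * K ^ Suc n * t ^ Suc (Suc n) / fact (Suc (Suc n))"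
      by (simp add: field_simps del: of_nat_Suc)
    finally show ?case .
  qed
  have summ: "summable (\<lambda>n. x (Suc n) t - x n t)" if t: "0 \<le> t" for t
  proof (rule summable_norm_cancel, rule summable_comparison_test)
    show "summable (\<lambda>n. M * t * (inverse (fact n) * (K * t) ^ n))"
      by (intro summable_mult summable_exp)
    show "\<exists>N. \<forall>n\<ge>N. norm (norm (x (Suc n) t - x n t)) \<le> M * t * (inverse (fact n) * (K * t) ^ n)"
    proof (intro exI allI impI)
      fix n :: nat
      have "norm (norm (x (Suc n) t - x n t)) \<le> M * K ^ n * t ^ Suc n / fact (Suc n)" using est[OF t] by simp
      also have "\<dots> \<le> M * K ^ n * t ^ Suc n / fact n"
        using t M0 K0 by (intro divide_left_mono) (auto simp: fact_mono)
      also have "\<dots> = M * t * (inverse (fact n) * (K * t) ^ n)"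
        by (simp add: field_simps power_mult_distrib)
      finally show "norm (norm (x (Suc n) t - x n t)) \<le> M * t * (inverse (fact n) * (K * t) ^ n)" .
    qed
  qed
  define X where "X t = (\<Sum>n. x (Suc n) t - x n t)" for t
  have conv: "(\<lambda>n. x n t) \<longlonglongrightarrow> X t" if "0 \<le> t" for t
  proof -
    have "(\<lambda>n. x (Suc n) t - x n t) sums X t" unfolding X_def using summ[OF that] by (rule summable_sums)
    then have "(\<lambda>n. \<Sum>i<n. x (Suc i) t - x i t) \<longlonglongrightarrow> X t" by (simp add: sums_def)
    moreover have "(\<Sum>i<n. x (Suc i) t - x i t) = x n t" for n
      by (subst sum_lessThan_telescope) (simp add: x_def)
    ultimately show ?thesis by simp
  qed
  have inteq: "X t = integral {0..t} (\<lambda>s. G (X s)) \<and> (\<lambda>s. G (X s)) integrable_on {0..t}" if t: "0 \<le> t" for t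
  proof -
    have p1: "(\<lambda>s. G (x k s)) integrable_on {0..t}" for k by (rule ix)
    have p2: "(\<lambda>s. M) integrable_on {0..t}" by (rule integrable_const_ivl)
    have p3: "norm (G (x k s)) \<le> M" for k s by (rule bnd)
    have p4: "(\<lambda>k. G (x k s)) \<longlonglongrightarrow> G (X s)" if "s \<in> {0..t}" for s
    proof -
      have "(\<lambda>n. x n s) \<longlonglongrightarrow> X s" using conv that by auto
      then show "(\<lambda>k. G (x k s)) \<longlonglongrightarrow> G (X s)"
        by (rule continuous_on_tendsto_compose[OF cG]) auto
    qed
    note dc = dominated_convergence[of "\<lambda>k s. G (x k s)" "{0..t}" "\<lambda>s. M" "\<lambda>s. G (X s)", OF p1 p2 p3 p4]
    have "(\<lambda>k. x (Suc k) t) \<longlonglongrightarrow> integral {0..t} (\<lambda>s. G (X s))" using dc(2) by (simp add: x_def)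
    moreover have "(\<lambda>k. x (Suc k) t) \<longlonglongrightarrow> X t" using conv[OF t] by (rule LIMSEQ_Suc)
    ultimately show ?thesis using dc(1) LIMSEQ_unique by blast
  qed
  have lipX: "M-lipschitz_on {0..} X"
  proof (rule lipschitz_onI[OF _ M0])
    have *: "dist (X t) (X s) \<le> M * dist t s" if st: "0 \<le> s" "s \<le> t" for s t
    proof -
      have ii: "(\<lambda>u. G (X u)) integrable_on {0..t}" using inteq st by auto
      have e1: "X t = integral {0..t} (\<lambda>u. G (X u))" using inteq[of t] st by simp
      have e2: "X s = integral {0..s} (\<lambda>u. G (X u))" using inteq[of s] st by simp
      have "X t - X s = integral {s..t} (\<lambda>u. G (X u))"
        unfolding e1 e2 Henstock_Kurzweil_Integration.integral_combine[OF st ii, symmetric] by simp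
      also have "norm \<dots> \<le> integral {s..t} (\<lambda>u. M)"
      proof (rule integral_norm_bound_integral)
        show "(\<lambda>u. G (X u)) integrable_on {s..t}" by (rule integrable_subinterval_real[OF ii]) (use st in auto)
      qed (auto intro: bnd)
      finally show ?thesis using st by (simp add: dist_norm dist_real_def mult.commute)
    qed
    fix s t :: real assume "s \<in> {0..}" "t \<in> {0..}"
    then show "dist (X s) (X t) \<le> M * dist s t"
      using *[of s t] *[of t s] by (cases "s \<le> t") (auto simp: dist_commute)
  qed
  have "X 0 = 0" using inteq[of 0] by simp
  moreover have "continuous_on {0..} X" by (rule lipschitz_on_continuous_on[OF lipX])
  moreover have "\<forall>t\<ge>0. X t = integral {0..t} (\<lambda>s. G (X s))" using inteq by blast
  ultimately show ?thesis by blast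
qed



locale gfset =
  fixes Phi :: "real^'w \<Rightarrow> 'h::{real_inner, complete_space}"
    and Phi' :: "real^'w \<Rightarrow> ((real^'w) \<Rightarrow>\<^sub>L 'h)"
    and L :: real
  assumes deriv: "\<And>x. (Phi has_derivative blinfun_apply (Phi' x)) (at x)"
    and lip: "L-lipschitz_on UNIV Phi'"
begin

definition gradF :: "'h \<Rightarrow> real^'w \<Rightarrow> real^'w" where
  "gradF f w = (\<chi> j. inner (blinfun_apply (Phi' w) (axis j 1)) (f - Phi w))"

lemma L0: "0 \<le> L" using lip lipschitz_on_nonneg by blast

lemma lipPhi': "norm (Phi' x - Phi' y) \<le> L * norm (x - y)"
  using lipschitz_onD[OF lip, of x y] by (simp add: dist_norm)

lemma Phi_cont: "continuous_on S Phi"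
  using deriv has_derivative_continuous continuous_at_imp_continuous_on by blast

lemma grad_loss: "(gf_loss Phi f has_derivative (\<lambda>v. (- gradF f w) \<bullet> v)) (at w)"
proof -
  have eq: "gf_loss Phi f = (\<lambda>w. (1/2) * ((f - Phi w) \<bullet> (f - Phi w)))"
    by (auto simp: gf_loss_def power2_norm_eq_inner fun_eq_iff)
  have d: "((\<lambda>w. (1/2) * ((f - Phi w) \<bullet> (f - Phi w))) has_derivative
      (\<lambda>v. (1/2) * ((f - Phi w) \<bullet> (- blinfun_apply (Phi' w) v) + (- blinfun_apply (Phi' w) v) \<bullet> (f - Phi w)))) (at w)"
    by (auto intro!: derivative_eq_intros deriv)
  have "(1/2) * ((f - Phi w) \<bullet> (- blinfun_apply (Phi' w) v) + (- blinfun_apply (Phi' w) v) \<bullet> (f - Phi w))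
      = (- gradF f w) \<bullet> v" for v
  proof -
    have "blinfun_apply (Phi' w) v = (\<Sum>j\<in>UNIV. v$j *\<^sub>R blinfun_apply (Phi' w) (axis j 1))"
    proof -
      have "blinfun_apply (Phi' w) v = blinfun_apply (Phi' w) (\<Sum>j\<in>UNIV. v$j *s axis j 1)"
        by (simp add: basis_expansion)
      also have "\<dots> = (\<Sum>j\<in>UNIV. v$j *\<^sub>R blinfun_apply (Phi' w) (axis j 1))"
        by (simp add: blinfun.sum_right blinfun.scaleR_right scalar_mult_eq_scaleR)
      finally show ?thesis .
    qed
    then have "(1/2) * ((f - Phi w) \<bullet> (- blinfun_apply (Phi' w) v) + (- blinfun_apply (Phi' w) v) \<bullet> (f - Phi w))
        = - (\<Sum>j\<in>UNIV. v$j * (blinfun_apply (Phi' w) (axis j 1) \<bullet> (f - Phi w)))"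
      by (simp add: inner_commute inner_sum_left inner_sum_right)
    also have "\<dots> = (- gradF f w) \<bullet> v"
      by (simp add: gradF_def inner_vec_def sum_negf mult.commute)
    finally show ?thesis .
  qed
  then show ?thesis using d unfolding eq by simp
qed

definition Ab :: "real \<Rightarrow> real" where "Ab R = norm (Phi' 0) + L * R"
definition Bf :: "'h \<Rightarrow> real \<Rightarrow> real" where "Bf f R = norm f + norm (Phi 0) + Ab R * R"

lemma Ab_nonneg: "0 \<le> R \<Longrightarrow> 0 \<le> Ab R"
  using L0 by (simp add: Ab_def)

lemma normPhi': assumes "norm x \<le> R" shows "norm (Phi' x) \<le> Ab R"
proof -
  have "norm (Phi' x) \<le> norm (Phi' 0) + norm (Phi' x - Phi' 0)" by (metis norm_triangle_sub add.commute)
  also have "norm (Phi' x - Phi' 0) \<le> L * norm x" using lipPhi'[of x 0] by simp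
  also have "L * norm x \<le> L * R" using assms L0 by (intro mult_left_mono)
  finally show ?thesis by (simp add: Ab_def)
qed

lemma Phi_lipR:
  assumes "norm x \<le> R" "norm y \<le> R"
  shows "norm (Phi x - Phi y) \<le> Ab R * norm (x - y)"
proof (rule differentiable_bound[where S="cball 0 R" and f'="\<lambda>x. blinfun_apply (Phi' x)"])
  show "convex (cball (0::real^'w) R)" by simp
  show "(Phi has_derivative blinfun_apply (Phi' x)) (at x within cball 0 R)" for x
    using deriv has_derivative_at_withinI by blast
  show "onorm (blinfun_apply (Phi' x)) \<le> Ab R" if "x \<in> cball 0 R" for x
    using normPhi'[of x R] that by (simp add: norm_blinfun.rep_eq)
qed (use assms in auto)

lemma resid_bound: assumes "norm x \<le> R" "0 \<le> R" shows "norm (f - Phi x) \<le> Bf f R"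
proof -
  have "norm (Phi x - Phi 0) \<le> Ab R * norm x" using Phi_lipR[of x R 0] assms by simp
  also have "\<dots> \<le> Ab R * R" using assms Ab_nonneg by (intro mult_left_mono) auto
  finally have "norm (Phi x - Phi 0) \<le> Ab R * R" .
  moreover have "norm (f - Phi x) \<le> norm f + norm (Phi x)" by (rule norm_triangle_ineq4)
  moreover have "norm (Phi x) \<le> norm (Phi 0) + norm (Phi x - Phi 0)" by (rule norm_triangle_sub)
  ultimately show ?thesis by (simp add: Bf_def)
qed

lemma Bf_nonneg: "0 \<le> R \<Longrightarrow> 0 \<le> Bf f R"
  using Ab_nonneg[of R] by (simp add: Bf_def)

lemma gradF_bound:
  assumes "norm x \<le> R" "0 \<le> R"
  shows "norm (gradF f x) \<le> CARD('w) * (Ab R * Bf f R)"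
proof -
  have "norm (gradF f x) \<le> (\<Sum>j\<in>UNIV. \<bar>gradF f x $ j\<bar>)" by (rule norm_le_l1_cart)
  also have "\<dots> \<le> (\<Sum>j\<in>(UNIV::'w set). Ab R * Bf f R)"
  proof (rule sum_mono)
    fix j :: 'w
    have "\<bar>gradF f x $ j\<bar> \<le> norm (blinfun_apply (Phi' x) (axis j 1)) * norm (f - Phi x)"
      unfolding gradF_def by (simp add: Cauchy_Schwarz_ineq2)
    also have "\<dots> \<le> Ab R * Bf f R"
    proof (rule mult_mono)
      show "norm (blinfun_apply (Phi' x) (axis j 1)) \<le> Ab R"
        using norm_blinfun[of "Phi' x" "axis j 1"] normPhi'[OF assms(1)] by simp
    qed (use resid_bound[OF assms] Ab_nonneg[OF assms(2)] in auto)
    finally show "\<bar>gradF f x $ j\<bar> \<le> Ab R * Bf f R" .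
  qed
  finally show ?thesis by simp
qed

lemma gradF_lip:
  assumes "norm x \<le> R" "norm y \<le> R" "0 \<le> R"
  shows "norm (gradF f x - gradF f y) \<le> CARD('w) * (L * Bf f R + Ab R * Ab R) * norm (x - y)"
proof -
  have "norm (gradF f x - gradF f y) \<le> (\<Sum>j\<in>UNIV. \<bar>(gradF f x - gradF f y) $ j\<bar>)" by (rule norm_le_l1_cart)
  also have "\<dots> \<le> (\<Sum>j\<in>(UNIV::'w set). (L * Bf f R + Ab R * Ab R) * norm (x - y))"
  proof (rule sum_mono)
    fix j :: 'w
    define ax where "ax = blinfun_apply (Phi' x) (axis j 1)"
    define ay where "ay = blinfun_apply (Phi' y) (axis j 1)"
    have "(gradF f x - gradF f y) $ j = (ax - ay) \<bullet> (f - Phi x) + ay \<bullet> (Phi y - Phi x)"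
      unfolding gradF_def ax_def ay_def by (simp add: inner_diff_left inner_diff_right)
    then have "\<bar>(gradF f x - gradF f y) $ j\<bar> \<le> \<bar>(ax - ay) \<bullet> (f - Phi x)\<bar> + \<bar>ay \<bullet> (Phi y - Phi x)\<bar>"
      by (simp only: abs_triangle_ineq)
    also have "\<dots> \<le> norm (ax - ay) * norm (f - Phi x) + norm ay * norm (Phi y - Phi x)"
      by (intro add_mono Cauchy_Schwarz_ineq2)
    also have "\<dots> \<le> (L * norm (x - y)) * Bf f R + Ab R * (Ab R * norm (x - y))"
    proof (rule add_mono; rule mult_mono)
      have "norm (ax - ay) = norm (blinfun_apply (Phi' x - Phi' y) (axis j 1))"
        by (simp add: ax_def ay_def blinfun.diff_left)
      also have "\<dots> \<le> norm (Phi' x - Phi' y)" using norm_blinfun[of "Phi' x - Phi' y" "axis j 1"] by simp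
      also have "\<dots> \<le> L * norm (x - y)" by (rule lipPhi')
      finally show "norm (ax - ay) \<le> L * norm (x - y)" .
      show "norm (f - Phi x) \<le> Bf f R" using resid_bound assms by auto
      show "norm ay \<le> Ab R" using norm_blinfun[of "Phi' y" "axis j 1"] normPhi'[OF assms(2)] by (simp add: ay_def)
      show "norm (Phi y - Phi x) \<le> Ab R * norm (x - y)" using Phi_lipR[OF assms(2,1)] by (simp add: norm_minus_commute)
    qed (use L0 Ab_nonneg[OF assms(3)] in auto)
    also have "\<dots> = (L * Bf f R + Ab R * Ab R) * norm (x - y)" by (simp add: algebra_simps)
    finally show "\<bar>(gradF f x - gradF f y) $ j\<bar> \<le> (L * Bf f R + Ab R * Ab R) * norm (x - y)" .
  qed
  finally show ?thesis by simp
qed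

lemma gradF_fdiff:
  assumes "norm x \<le> R"
  shows "norm (gradF f x - gradF f' x) \<le> CARD('w) * Ab R * norm (f - f')"
proof -
  have "norm (gradF f x - gradF f' x) \<le> (\<Sum>j\<in>UNIV. \<bar>(gradF f x - gradF f' x) $ j\<bar>)" by (rule norm_le_l1_cart)
  also have "\<dots> \<le> (\<Sum>j\<in>(UNIV::'w set). Ab R * norm (f - f'))"
  proof (rule sum_mono)
    fix j :: 'w
    have "(gradF f x - gradF f' x) $ j = blinfun_apply (Phi' x) (axis j 1) \<bullet> (f - f')"
      unfolding gradF_def by (simp add: inner_diff_right)
    then have "\<bar>(gradF f x - gradF f' x) $ j\<bar> \<le> norm (blinfun_apply (Phi' x) (axis j 1)) * norm (f - f')"
      by (simp add: Cauchy_Schwarz_ineq2)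
    also have "\<dots> \<le> Ab R * norm (f - f')"
      using norm_blinfun[of "Phi' x" "axis j 1"] normPhi'[OF assms] by (intro mult_right_mono) auto
    finally show "\<bar>(gradF f x - gradF f' x) $ j\<bar> \<le> Ab R * norm (f - f')" .
  qed
  finally show ?thesis by simp
qed

definition cp :: "real \<Rightarrow> real^'w \<Rightarrow> real^'w" where "cp R x = closest_point (cball 0 R) x"
definition G :: "real \<Rightarrow> 'h \<Rightarrow> real^'w \<Rightarrow> real^'w" where "G R f x = gradF f (cp R x)"

lemma cp_norm: "0 \<le> R \<Longrightarrow> norm (cp R x) \<le> R"
  unfolding cp_def using closest_point_in_set[of "cball (0::real^'w) R" x] by auto

lemma cp_lip: "0 \<le> R \<Longrightarrow> norm (cp R x - cp R y) \<le> norm (x - y)"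
  unfolding cp_def using closest_point_lipschitz[where S="cball (0::real^'w) R" and x=x and y=y] by (simp add: dist_norm)

lemma cp_id: "norm x \<le> R \<Longrightarrow> cp R x = x"
  unfolding cp_def by (rule closest_point_self) simp

definition KG :: "real \<Rightarrow> 'h \<Rightarrow> real" where "KG R f = CARD('w) * (L * Bf f R + Ab R * Ab R)"

lemma KG_nonneg: "0 \<le> R \<Longrightarrow> 0 \<le> KG R f"
  unfolding KG_def using L0 Bf_nonneg[of R f] Ab_nonneg[of R] by simp

lemma G_lip: "0 \<le> R \<Longrightarrow> norm (G R f x - G R f y) \<le> KG R f * norm (x - y)"
proof -
  assume R: "0 \<le> R"
  have "norm (G R f x - G R f y) \<le> KG R f * norm (cp R x - cp R y)"
    unfolding G_def KG_def using gradF_lip[OF cp_norm[OF R] cp_norm[OF R] R] by simp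
  also have "\<dots> \<le> KG R f * norm (x - y)" using cp_lip[OF R] KG_nonneg[OF R] by (intro mult_left_mono)
  finally show ?thesis .
qed

lemma G_bound: "0 \<le> R \<Longrightarrow> norm (G R f x) \<le> CARD('w) * (Ab R * Bf f R)"
  unfolding G_def using gradF_bound[OF cp_norm] by auto

lemma G_fdiff: "0 \<le> R \<Longrightarrow> norm (G R f x - G R f' x) \<le> CARD('w) * Ab R * norm (f - f')"
  unfolding G_def using gradF_fdiff[OF cp_norm] by auto

lemma G_cont: "0 \<le> R \<Longrightarrow> continuous_on UNIV (G R f)"
  by (rule lipschitz_on_continuous_on[of "KG R f"], rule lipschitz_onI)
    (use G_lip KG_nonneg in \<open>auto simp: dist_norm\<close>)

end


lemma cont_induct:
  fixes \<phi> :: "real \<Rightarrow> real"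
  assumes cont: "continuous_on {0..T} \<phi>" and BR: "B < R" and phi0: "\<phi> 0 \<le> B"
    and step: "\<And>t. t \<in> {0..T} \<Longrightarrow> (\<forall>s\<in>{0..t}. \<phi> s \<le> R) \<Longrightarrow> \<phi> t \<le> B"
    and t: "t \<in> {0..T}"
  shows "\<phi> t \<le> B"
proof (rule ccontr)
  assume "\<not> \<phi> t \<le> B"
  then obtain s1 where s1: "s1 \<in> {0..t}" "R < \<phi> s1" using step[OF t] by force
  define A where "A = {0..T} \<inter> \<phi> -` {R..}"
  have clA: "closed A" unfolding A_def by (rule continuous_closed_preimage[OF cont]) auto
  have s1A: "s1 \<in> A" using s1 t by (auto simp: A_def)
  have bdd: "bdd_below A" unfolding A_def by (auto intro: bdd_belowI[of _ 0])
  define s0 where "s0 = Inf A"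
  have s0A: "s0 \<in> A" unfolding s0_def using closed_contains_Inf[OF _ bdd clA] s1A by blast
  have low: "s0 \<le> s" if "s \<in> A" for s unfolding s0_def by (rule cInf_lower[OF that bdd])
  have s0T: "s0 \<in> {0..T}" "R \<le> \<phi> s0" using s0A by (auto simp: A_def)
  obtain s' where s': "0 \<le> s'" "s' \<le> s0" "\<phi> s' = R"
    using IVT'[of \<phi> 0 R s0] phi0 BR s0T continuous_on_subset[OF cont, of "{0..s0}"] by auto
  have "s' \<in> A" using s' s0T by (auto simp: A_def)
  then have "s' = s0" using low s' by force
  have "\<forall>s\<in>{0..s0}. \<phi> s \<le> R"
  proof
    fix s assume s: "s \<in> {0..s0}"
    show "\<phi> s \<le> R"
    proof (cases "s = s0")
      case True then show ?thesis using s' \<open>s' = s0\<close> by simp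
    next
      case False
      then have "s \<notin> A" using low s by force
      then show ?thesis using s s0T by (auto simp: A_def)
    qed
  qed
  then have "\<phi> s0 \<le> B" using step[OF s0T(1)] by blast
  then show False using s0T BR by simp
qed

context gfset begin

definition Xs :: "real \<Rightarrow> 'h \<Rightarrow> real \<Rightarrow> real^'w" where
  "Xs R f = (SOME X. X 0 = 0 \<and> continuous_on {0..} X \<and> (\<forall>t\<ge>0. X t = integral {0..t} (\<lambda>s. G R f (X s))))"

lemma Xs_props:
  assumes "0 \<le> R"
  shows "Xs R f 0 = 0 \<and> continuous_on {0..} (Xs R f) \<and> (\<forall>t\<ge>0. Xs R f t = integral {0..t} (\<lambda>s. G R f (Xs R f s)))"
  unfolding Xs_def
  by (rule someI_ex[OF picard_exists[OF G_lip[OF assms] KG_nonneg[OF assms] G_bound[OF assms]]])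

lemma Xs_cont: "0 \<le> R \<Longrightarrow> continuous_on {0..} (Xs R f)" using Xs_props by blast
lemma Xs_0: "0 \<le> R \<Longrightarrow> Xs R f 0 = 0" using Xs_props by blast
lemma Xs_eq: "0 \<le> R \<Longrightarrow> 0 \<le> t \<Longrightarrow> Xs R f t = integral {0..t} (\<lambda>s. G R f (Xs R f s))" using Xs_props by blast

lemma GXs_cont: "0 \<le> R \<Longrightarrow> continuous_on {0..} (\<lambda>s. G R f (Xs R f s))"
  by (rule continuous_on_compose2[OF G_cont Xs_cont]) auto

lemma Xs_deriv:
  assumes R: "0 \<le> R" and t: "0 \<le> t"
  shows "(Xs R f has_vector_derivative G R f (Xs R f t)) (at t within {0..})"
proof (rule has_vector_derivative_transform_within[OF indef_deriv[OF GXs_cont[OF R] t], of 1])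
  fix x' :: real assume "x' \<in> {0..}" "dist x' t < 1"
  then show "integral {0..x'} (\<lambda>s. G R f (Xs R f s)) = Xs R f x'" using Xs_eq[OF R] by simp
qed (use t in auto)

lemma loss_cont: "continuous_on S (gf_loss Phi f)"
  unfolding gf_loss_def[abs_def] by (intro continuous_intros Phi_cont)

lemma loss_nonneg: "0 \<le> gf_loss Phi f w" by (simp add: gf_loss_def)

lemma loss_deriv:
  assumes R: "0 \<le> R" and s: "0 < s" and nR: "norm (Xs R f s) \<le> R"
  shows "(Xs R f has_vector_derivative gradF f (Xs R f s)) (at s)"
    and "((\<lambda>u. gf_loss Phi f (Xs R f u)) has_real_derivative (- ((norm (gradF f (Xs R f s))) ^ 2))) (at s)"
proof -
  have int: "s \<in> interior {0..}" using s by simp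
  have "(Xs R f has_vector_derivative G R f (Xs R f s)) (at s)"
    using Xs_deriv[OF R, of s] s at_within_interior[OF int] by simp
  then show d: "(Xs R f has_vector_derivative gradF f (Xs R f s)) (at s)"
    by (simp add: G_def cp_id[OF nR])
  define g where "g = gradF f (Xs R f s)"
  have "((\<lambda>u. gf_loss Phi f (Xs R f u)) has_derivative (\<lambda>h. (- gradF f (Xs R f s)) \<bullet> (h *\<^sub>R g))) (at s)"
    using has_derivative_compose[OF d[unfolded has_vector_derivative_def] grad_loss] by (simp add: g_def)
  moreover have "(\<lambda>h. (- gradF f (Xs R f s)) \<bullet> (h *\<^sub>R g)) = (*) (- ((norm (gradF f (Xs R f s))) ^ 2))"
    by (auto simp: g_def power2_norm_eq_inner fun_eq_iff)
  ultimately show "((\<lambda>u. gf_loss Phi f (Xs R f u)) has_real_derivative (- ((norm (gradF f (Xs R f s))) ^ 2))) (at s)"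
    by (simp add: has_field_derivative_def)
qed

lemma Xs_bound:
  assumes BR: "T/2 + gf_loss Phi f 0 / 2 < R" and t: "t \<in> {0..T}"
  shows "norm (Xs R f t) \<le> T/2 + gf_loss Phi f 0 / 2"
proof -
  define B where "B = T/2 + gf_loss Phi f 0 / 2"
  have T0: "0 \<le> T" using t by auto
  have B0: "0 \<le> B" using T0 loss_nonneg[of f 0] by (simp add: B_def)
  have R0: "0 \<le> R" using BR B0 B_def by linarith
  define X where "X = Xs R f"
  have X0: "X 0 = 0" using Xs_0[OF R0] by (simp add: X_def)
  have cX: "continuous_on {0..T} X" unfolding X_def by (rule continuous_on_subset[OF Xs_cont[OF R0]]) auto
  show ?thesis unfolding B_def[symmetric] X_def[symmetric]
  proof (rule cont_induct[where \<phi>="\<lambda>t. norm (X t)" and R=R and T=T, OF _ _ _ _ t])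
    show "continuous_on {0..T} (\<lambda>t. norm (X t))" by (intro continuous_intros cX)
    show "B < R" using BR by (simp add: B_def)
    show "norm (X 0) \<le> B" using X0 B0 by simp
    fix t assume t: "t \<in> {0..T}" and hyp: "\<forall>s\<in>{0..t}. norm (X s) \<le> R"
    show "norm (X t) \<le> B"
    proof (cases "t = 0")
      case True then show ?thesis using X0 B0 by simp
    next
      case False
      then have tpos: "0 < t" using t by auto
      define q where "q u = u/2 - gf_loss Phi f (X u) / 2" for u
      have "norm (X t - X 0) \<le> q t - q 0"
      proof (rule differentiable_bound_general[OF tpos])
        show "continuous_on {0..t} X" using cX t by (auto intro: continuous_on_subset)
        have "continuous_on {0..t} (\<lambda>u. gf_loss Phi f (X u))"
          by (rule continuous_on_compose2[OF loss_cont \<open>continuous_on {0..t} X\<close>]) auto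
        then show "continuous_on {0..t} q" unfolding q_def by (intro continuous_intros) auto
        fix s assume s: "0 < s" "s < t"
        have nR: "norm (Xs R f s) \<le> R" using hyp s by (auto simp: X_def)
        show "(X has_vector_derivative gradF f (X s)) (at s)"
          using loss_deriv(1)[OF R0 s(1) nR] by (simp add: X_def)
        have "(q has_real_derivative (1/2 - (- ((norm (gradF f (X s))) ^ 2)) / 2)) (at s)"
          unfolding q_def using loss_deriv(2)[OF R0 s(1) nR]
          by (auto intro!: derivative_eq_intros simp: X_def)
        then show "(q has_vector_derivative (1/2 + (norm (gradF f (X s))) ^ 2 / 2)) (at s)"
          by (simp add: has_real_derivative_iff_has_vector_derivative)
        have "0 \<le> (norm (gradF f (X s)) - 1) ^ 2" by simp
        then show "norm (gradF f (X s)) \<le> 1/2 + (norm (gradF f (X s))) ^ 2 / 2"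
          by (simp add: power2_eq_square algebra_simps)
      qed
      also have "\<dots> \<le> B" unfolding q_def B_def using X0 t loss_nonneg[of f "X t"] by simp
      finally show ?thesis using X0 by simp
    qed
  qed
qed

lemma Xs_agree:
  assumes R1: "T/2 + gf_loss Phi f 0 / 2 < R1" and R2: "T/2 + gf_loss Phi f 0 / 2 < R2" and t: "t \<in> {0..T}"
  shows "Xs R1 f t = Xs R2 f t"
proof -
  have B0: "0 \<le> T/2 + gf_loss Phi f 0 / 2" using t loss_nonneg[of f 0] by auto
  have R10: "0 \<le> R1" and R20: "0 \<le> R2" using R1 R2 B0 by linarith+
  have "norm (Xs R1 f t - Xs R2 f t) \<le> 0 * T * exp (KG R2 f * t)"
  proof (rule ode_compare[OF _ _ G_cont[OF R20] G_cont[OF R20] _ _ G_lip[OF R20] KG_nonneg[OF R20] _ t])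
    show "continuous_on {0..T} (Xs R1 f)" by (rule continuous_on_subset[OF Xs_cont[OF R10]]) auto
    show "continuous_on {0..T} (Xs R2 f)" by (rule continuous_on_subset[OF Xs_cont[OF R20]]) auto
    fix s assume s: "s \<in> {0..T}"
    show "Xs R2 f s = integral {0..s} (\<lambda>u. G R2 f (Xs R2 f u))" using Xs_eq[OF R20] s by auto
    have "Xs R1 f s = integral {0..s} (\<lambda>u. G R1 f (Xs R1 f u))" using Xs_eq[OF R10] s by auto
    also have "\<dots> = integral {0..s} (\<lambda>u. G R2 f (Xs R1 f u))"
    proof (rule integral_cong)
      fix u assume u: "u \<in> {0..s}"
      have "norm (Xs R1 f u) \<le> T/2 + gf_loss Phi f 0 / 2" using Xs_bound[OF R1] u s by auto
      then show "G R1 f (Xs R1 f u) = G R2 f (Xs R1 f u)"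
        using R1 R2 by (simp add: G_def cp_id)
    qed
    finally show "Xs R1 f s = integral {0..s} (\<lambda>u. G R2 f (Xs R1 f u))" .
  qed simp
  then show ?thesis by simp
qed

definition wsol :: "'h \<Rightarrow> real \<Rightarrow> real^'w" where
  "wsol f t = Xs (t/2 + gf_loss Phi f 0 / 2 + 1) f t"

lemma wsol_eq:
  assumes "T/2 + gf_loss Phi f 0 / 2 < R" "t \<in> {0..T}"
  shows "wsol f t = Xs R f t"
  unfolding wsol_def using assms by (intro Xs_agree[where T=t]) auto

lemma wsol_solution: "gf_solution Phi f (wsol f)"
  unfolding gf_solution_def
proof (intro conjI allI impI)
  show "wsol f 0 = 0" unfolding wsol_def using Xs_0 loss_nonneg[of f 0] by simp
  fix t :: real assume t: "0 \<le> t"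
  define R where "R = (t+1)/2 + gf_loss Phi f 0 / 2 + 1"
  have R0: "0 \<le> R" using loss_nonneg[of f 0] t by (simp add: R_def)
  have nR: "norm (Xs R f t) \<le> R"
    using Xs_bound[of "t+1" f R t] t by (simp add: R_def)
  have "(Xs R f has_vector_derivative G R f (Xs R f t)) (at t within {0..})" by (rule Xs_deriv[OF R0 t])
  then have "(Xs R f has_vector_derivative gradF f (Xs R f t)) (at t within {0..})"
    by (simp add: G_def cp_id[OF nR])
  then have "(wsol f has_vector_derivative gradF f (Xs R f t)) (at t within {0..})"
  proof (rule has_vector_derivative_transform_within[where d=1])
    fix x' :: real assume "x' \<in> {0..}" "dist x' t < 1"
    then show "Xs R f x' = wsol f x'" using wsol_eq[of "t+1" f R x'] by (auto simp: R_def dist_real_def)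
  qed (use t in auto)
  moreover have "wsol f t = Xs R f t" using wsol_eq[of "t+1" f R t] t by (simp add: R_def)
  ultimately have D: "(wsol f has_vector_derivative - (- gradF f (wsol f t))) (at t within {0..})" by simp
  show "\<exists>g. (gf_loss Phi f has_derivative (\<bullet>) g) (at (wsol f t)) \<and> (wsol f has_vector_derivative - g) (at t within {0..})"
    using grad_loss[of f "wsol f t"] D by blast
qed

lemma wsol_mono:
  assumes t1: "0 \<le> t1" and t12: "t1 \<le> t2"
  shows "gf_loss Phi f (wsol f t2) \<le> gf_loss Phi f (wsol f t1)"
proof -
  define R where "R = t2/2 + gf_loss Phi f 0 / 2 + 1"
  have R0: "0 \<le> R" using loss_nonneg[of f 0] t1 t12 by (simp add: R_def)
  have e: "wsol f u = Xs R f u" if "u \<in> {0..t2}" for u using wsol_eq[of t2 f R u] that by (simp add: R_def)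
  have "gf_loss Phi f (Xs R f t2) \<le> gf_loss Phi f (Xs R f t1)"
  proof (rule DERIV_nonpos_imp_decreasing_open[OF t12])
    show "continuous_on {t1..t2} (\<lambda>u. gf_loss Phi f (Xs R f u))"
      by (rule continuous_on_compose2[OF loss_cont continuous_on_subset[OF Xs_cont[OF R0]]]) (use t1 in auto)
    fix s assume s: "t1 < s" "s < t2"
    have nR: "norm (Xs R f s) \<le> R" using Xs_bound[of t2 f R s] s t1 by (simp add: R_def)
    show "\<exists>y. ((\<lambda>u. gf_loss Phi f (Xs R f u)) has_real_derivative y) (at s) \<and> y \<le> 0"
      using loss_deriv(2)[OF R0 _ nR] s t1 by (intro exI conjI) auto
  qed
  then show ?thesis using e[of t1] e[of t2] t1 t12 by simp
qed

end


context gfset begin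

lemma Xs_fdist:
  assumes R: "0 \<le> R" and T: "0 \<le> T"
  shows "norm (Xs R f T - Xs R f' T) \<le> (CARD('w) * Ab R * norm (f - f')) * T * exp (KG R f * T)"
proof (rule ode_compare[OF _ _ G_cont[OF R] G_cont[OF R] _ _ G_lip[OF R] KG_nonneg[OF R] G_fdiff[OF R]])
  show "continuous_on {0..T} (Xs R f)" by (rule continuous_on_subset[OF Xs_cont[OF R]]) auto
  show "continuous_on {0..T} (Xs R f')" by (rule continuous_on_subset[OF Xs_cont[OF R]]) auto
  show "Xs R f t = integral {0..t} (\<lambda>s. G R f (Xs R f s))" if "t \<in> {0..T}" for t using Xs_eq[OF R] that by auto
  show "Xs R f' t = integral {0..t} (\<lambda>s. G R f' (Xs R f' s))" if "t \<in> {0..T}" for t using Xs_eq[OF R] that by auto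
qed (use T in auto)

lemma Xs_fcont:
  assumes R: "0 \<le> R" and T: "0 \<le> T"
  shows "continuous_on UNIV (\<lambda>f. Xs R f T)"
  unfolding continuous_on_iff
proof (intro ballI allI impI)
  fix f :: 'h and e :: real assume e: "0 < e"
  define C where "C = CARD('w) * Ab R * T * exp (KG R f * T)"
  have C0: "0 \<le> C" using Ab_nonneg[OF R] T by (simp add: C_def)
  define d where "d = e / (C + 1)"
  have d: "0 < d" using e C0 by (simp add: d_def)
  show "\<exists>d>0. \<forall>f'\<in>UNIV. dist f' f < d \<longrightarrow> dist (Xs R f' T) (Xs R f T) < e"
  proof (intro exI[of _ d] conjI ballI impI d)
    fix f' :: 'h assume "dist f' f < d"
    then have fd: "norm (f - f') < d" by (simp add: dist_norm norm_minus_commute)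
    have "dist (Xs R f' T) (Xs R f T) = norm (Xs R f T - Xs R f' T)" by (simp add: dist_norm norm_minus_commute)
    also have "\<dots> \<le> C * norm (f - f')" using Xs_fdist[OF R T, of f f'] by (simp add: C_def algebra_simps)
    also have "\<dots> \<le> C * d" using fd C0 by (intro mult_left_mono) auto
    also have "\<dots> < e" using e C0 by (simp add: d_def field_simps)
    finally show "dist (Xs R f' T) (Xs R f T) < e" .
  qed
qed

end


lemma card_option_UNIV: "CARD('w::finite option) = CARD('w) + 1"
proof -
  have "card (UNIV :: 'w option set) = card (insert None (range (Some :: 'w \<Rightarrow> _)))"
    by (simp add: UNIV_option_conv)
  also have "\<dots> = Suc (card (range (Some :: 'w \<Rightarrow> _)))" by (subst card_insert_disjoint) auto
  also have "card (range (Some :: 'w \<Rightarrow> _)) = CARD('w)" by (rule card_image) (simp add: inj_on_def)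
  finally show ?thesis by simp
qed

lemma embed_exists:
  assumes "\<exists>S::'h::real_inner set. independent S \<and> finite S \<and> card S = CARD('w::finite) + 1"
  shows "\<exists>(E :: real^('w option) \<Rightarrow> 'h) (Q :: 'h \<Rightarrow> real^('w option)). linear E \<and> bounded_linear Q \<and> (\<forall>y. Q (E y) = y)"
proof -
  obtain S :: "'h set" where S: "independent S" "finite S" "card S = CARD('w) + 1" using assms by blast
  have "card (UNIV :: 'w option set) = card S" using S card_option_UNIV by simp
  then obtain b :: "'w option \<Rightarrow> 'h" where b: "bij_betw b UNIV S"
    using finite_same_card_bij[of "UNIV :: 'w option set" S] S by auto
  have injb: "inj b" using b bij_betw_def by blast
  define E :: "real^('w option) \<Rightarrow> 'h" where "E y = (\<Sum>i\<in>UNIV. y$i *\<^sub>R b i)" for y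
  define Q0 :: "'h \<Rightarrow> real^('w option)" where "Q0 h = (\<chi> i. inner (b i) h)" for h
  have linE: "linear E"
    by (rule linearI) (simp_all add: E_def sum.distrib scaleR_add_left scaleR_sum_right)
  have blQ0: "bounded_linear Q0"
  proof (rule bounded_linear_intro[where K="\<Sum>i\<in>UNIV. norm (b i)"])
    show "Q0 (x + y) = Q0 x + Q0 y" for x y by (simp add: Q0_def vec_eq_iff inner_add_right)
    show "Q0 (r *\<^sub>R x) = r *\<^sub>R Q0 x" for r x by (simp add: Q0_def vec_eq_iff)
    fix x :: 'h
    have "norm (Q0 x) \<le> (\<Sum>i\<in>UNIV. \<bar>Q0 x $ i\<bar>)" by (rule norm_le_l1_cart)
    also have "\<dots> \<le> (\<Sum>i\<in>UNIV. norm (b i) * norm x)"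
      by (rule sum_mono) (simp add: Q0_def Cauchy_Schwarz_ineq2)
    also have "\<dots> = norm x * (\<Sum>i\<in>UNIV. norm (b i))" by (simp add: sum_distrib_left sum_distrib_right mult.commute)
    finally show "norm (Q0 x) \<le> norm x * (\<Sum>i\<in>UNIV. norm (b i))" .
  qed
  define A where "A = Q0 \<circ> E"
  have linA: "linear A" unfolding A_def using linE bounded_linear.linear[OF blQ0] by (rule linear_compose)
  have A0: "y = 0" if "A y = 0" for y
  proof -
    have "inner (E y) (E y) = y \<bullet> A y"
      by (simp add: A_def Q0_def E_def inner_vec_def inner_sum_left inner_commute)
    then have "E y = 0" using that by simp
    define c where "c v = y $ (the_inv_into UNIV b v)" for v
    have "(\<Sum>v\<in>S. c v *\<^sub>R v) = (\<Sum>i\<in>UNIV. c (b i) *\<^sub>R b i)"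
      using sum.reindex_bij_betw[OF b, of "\<lambda>v. c v *\<^sub>R v"] by simp
    also have "\<dots> = E y" by (simp add: c_def E_def the_inv_into_f_f[OF injb])
    finally have "(\<Sum>v\<in>S. c v *\<^sub>R v) = 0" using \<open>E y = 0\<close> by simp
    moreover have "\<forall>c. (\<Sum>v\<in>S. c v *\<^sub>R v) = 0 \<longrightarrow> (\<forall>v\<in>S. c v = 0)"
      using S(1) S(2) unfolding real_vector.independent_explicit_finite_subsets by blast
    ultimately have "\<forall>v\<in>S. c v = 0" by blast
    moreover have "b i \<in> S" for i using b by (auto simp: bij_betw_def)
    ultimately have "c (b i) = 0" for i by blast
    then show "y = 0" by (simp add: c_def the_inv_into_f_f[OF injb] vec_eq_iff)
  qed
  have injA: "inj A"
  proof (rule injI)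
    fix x y assume "A x = A y"
    then have "A (x - y) = 0" using linear_diff[OF linA] by simp
    then show "x = y" using A0 by force
  qed
  obtain M where M: "linear M" "M \<circ> A = id" using linear_injective_left_inverse[OF linA injA] by blast
  define Q where "Q = M \<circ> Q0"
  have "bounded_linear Q" unfolding Q_def
    using bounded_linear_compose[OF M(1)[unfolded linear_conv_bounded_linear] blQ0] by (simp add: o_def)
  moreover have "Q (E y) = y" for y using M(2) by (simp add: Q_def A_def fun_eq_iff)
  ultimately show ?thesis using linE by (intro exI[of _ E] exI[of _ Q] conjI) auto
qed



context gfset begin

lemma main_contra:
  fixes f0 :: 'h and \<epsilon> :: real
    and E :: "real^('w option) \<Rightarrow> 'h" and Q :: "'h \<Rightarrow> real^('w option)"
  assumes eps: "0 < \<epsilon>" and learn: "\<And>f. dist f f0 < \<epsilon> \<Longrightarrow> f \<in> gf_learnable Phi"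
    and linE: "linear E" and blQ: "bounded_linear Q" and QE: "\<And>y. Q (E y) = y"
  shows False
proof -
  obtain Eb where Eb: "0 < Eb" "\<And>y. norm (E y) \<le> Eb * norm y" using linear_bounded_pos[OF linE] by blast
  obtain Qb where Qb: "0 < Qb" "\<And>h. norm (Q h) \<le> norm h * Qb" using bounded_linear.pos_bounded[OF blQ] by blast
  define r where "r = \<epsilon> / (2 * Eb)"
  have r: "0 < r" using eps Eb by (simp add: r_def)
  define fy where "fy y = f0 + E y" for y
  have fy_near: "dist (fy y) f0 < \<epsilon>" if "y \<in> cball 0 r" for y
  proof -
    have "dist (fy y) f0 = norm (E y)" by (simp add: fy_def dist_norm)
    also have "\<dots> \<le> Eb * norm y" by (rule Eb(2))
    also have "\<dots> \<le> Eb * r" using that Eb by (intro mult_left_mono) auto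
    also have "\<dots> < \<epsilon>" using eps Eb by (simp add: r_def)
    finally show ?thesis .
  qed
  define \<Lambda> where "\<Lambda> = (norm (f0 - Phi 0) + \<epsilon>) ^ 2 / 2"
  have \<Lambda>0: "0 \<le> \<Lambda>" by (simp add: \<Lambda>_def)
  have L0le: "gf_loss Phi (fy y) 0 \<le> \<Lambda>" if "y \<in> cball 0 r" for y
  proof -
    have "norm (fy y - Phi 0) = norm ((f0 - Phi 0) + (fy y - f0))" by simp
    also have "\<dots> \<le> norm (f0 - Phi 0) + norm (fy y - f0)" by (rule norm_triangle_ineq)
    also have "\<dots> \<le> norm (f0 - Phi 0) + \<epsilon>" using fy_near[OF that] by (simp add: dist_norm)
    finally have "norm (fy y - Phi 0) ^ 2 \<le> (norm (f0 - Phi 0) + \<epsilon>) ^ 2"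
      by (intro power_mono) auto
    then show ?thesis by (simp add: gf_loss_def \<Lambda>_def)
  qed
  define Rn where "Rn T = T/2 + \<Lambda>/2 + 1" for T :: real
  have Rn0: "0 \<le> Rn T" if "0 \<le> T" for T using that \<Lambda>0 by (simp add: Rn_def)
  have wsolR: "wsol (fy y) t = Xs (Rn T) (fy y) t" if "y \<in> cball 0 r" "t \<in> {0..T}" for y t T
    by (rule wsol_eq[OF _ that(2)]) (use L0le[OF that(1)] in \<open>simp add: Rn_def\<close>)
  define \<delta> where "\<delta> = (r / (2 * Qb)) ^ 2 / 2"
  have \<delta>: "0 < \<delta>" using r Qb by (simp add: \<delta>_def)
  have cfy: "continuous_on UNIV fy"
    unfolding fy_def using linE[unfolded linear_conv_bounded_linear]
    by (intro continuous_intros linear_continuous_on) auto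
  have cX: "continuous_on UNIV (\<lambda>y. Xs (Rn T) (fy y) T)" if "0 \<le> T" for T
    by (rule continuous_on_compose2[OF Xs_fcont[OF Rn0[OF that] that] cfy]) auto
  have cPX: "continuous_on UNIV (\<lambda>y. Phi (Xs (Rn T) (fy y) T))" if "0 \<le> T" for T
    by (rule continuous_on_compose2[OF Phi_cont cX[OF that]]) auto
  define \<phi> where "\<phi> n y = gf_loss Phi (fy y) (Xs (Rn (real n)) (fy y) (real n))" for n :: nat and y
  have cphi: "continuous_on UNIV (\<phi> n)" for n
    unfolding \<phi>_def gf_loss_def by (intro continuous_intros cfy cPX) auto
  define V where "V n = {y. \<phi> n y < \<delta>}" for n
  have oV: "open (V n)" for n unfolding V_def by (rule open_Collect_less[OF cphi continuous_on_const])
  have cover: "cball 0 r \<subseteq> (\<Union>n. V n)"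
  proof
    fix y :: "real^('w option)" assume y: "y \<in> cball 0 r"
    have "fy y \<in> gf_learnable Phi" by (rule learn[OF fy_near[OF y]])
    then have "\<forall>w. gf_solution Phi (fy y) w \<longrightarrow> (INF t\<in>{0..}. gf_loss Phi (fy y) (w t)) = 0"
      unfolding gf_learnable_def by (rule CollectD)
    then have inf0: "(INF t\<in>{0..}. gf_loss Phi (fy y) (wsol (fy y) t)) = 0"
      using wsol_solution[of "fy y"] by blast
    then have lt: "Inf ((\<lambda>t. gf_loss Phi (fy y) (wsol (fy y) t)) ` {0..}) < \<delta>" using \<delta> by simp
    have ne: "(\<lambda>t. gf_loss Phi (fy y) (wsol (fy y) t)) ` {0..} \<noteq> {}" by auto
    obtain t where t: "t \<in> {0..}" "gf_loss Phi (fy y) (wsol (fy y) t) < \<delta>"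
      using cInf_lessD[OF ne lt] by blast
    define n where "n = nat \<lceil>t\<rceil>"
    have tn: "t \<le> real n" unfolding n_def by linarith
    have "\<phi> n y = gf_loss Phi (fy y) (wsol (fy y) (real n))"
      unfolding \<phi>_def using wsolR[OF y, of "real n" "real n"] by simp
    also have "\<dots> \<le> gf_loss Phi (fy y) (wsol (fy y) t)" using wsol_mono[of t "real n"] t tn by simp
    finally have "y \<in> V n" using t by (simp add: V_def)
    then show "y \<in> (\<Union>n. V n)" by blast
  qed
  obtain N where N0: "N \<subseteq> UNIV" and N: "finite N" "cball 0 r \<subseteq> (\<Union>n\<in>N. V n)"
    by (rule compactE_image[OF compact_cball[of "0::real^('w option)" r], of UNIV V]) (use oV cover in auto)
  define T where "T = Max (insert 0 N)"
  define X where "X y = Xs (Rn (real T)) (fy y) (real T)" for y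
  have lossT: "gf_loss Phi (fy y) (X y) < \<delta>" if y: "y \<in> cball 0 r" for y
  proof -
    obtain n where n: "n \<in> N" "\<phi> n y < \<delta>" using N y by (auto simp: V_def)
    have nT: "n \<le> T" unfolding T_def using N(1) n(1) by simp
    have "X y = wsol (fy y) (real T)" unfolding X_def using wsolR[OF y, of "real T" "real T"] by simp
    then have "gf_loss Phi (fy y) (X y) \<le> gf_loss Phi (fy y) (wsol (fy y) (real n))"
      using wsol_mono[of "real n" "real T"] nT by simp
    also have "\<dots> = \<phi> n y" unfolding \<phi>_def using wsolR[OF y, of "real n" "real n"] by simp
    finally show ?thesis using n by simp
  qed
  define g where "g y = Q (Phi (X y) - f0)" for y
  have cg: "continuous_on UNIV g"
    unfolding g_def X_def
    by (rule continuous_on_compose2[OF linear_continuous_on[OF blQ]]) (intro continuous_intros cPX, auto)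
  have gclose: "norm (y - g y) < r / 2" if y: "y \<in> cball 0 r" for y
  proof -
    have "y - g y = Q (E y) - Q (Phi (X y) - f0)" by (simp add: QE g_def)
    also have "\<dots> = Q (E y - (Phi (X y) - f0))"
      by (rule linear_diff[OF bounded_linear.linear[OF blQ], symmetric])
    also have "E y - (Phi (X y) - f0) = fy y - Phi (X y)" by (simp add: fy_def algebra_simps)
    finally have eq: "y - g y = Q (fy y - Phi (X y))" .
    have "(1/2) * norm (fy y - Phi (X y)) ^ 2 < (r / (2 * Qb)) ^ 2 / 2"
      using lossT[OF y] unfolding gf_loss_def \<delta>_def .
    then have "norm (fy y - Phi (X y)) ^ 2 < (r / (2 * Qb)) ^ 2" by linarith
    then have "norm (fy y - Phi (X y)) < r / (2 * Qb)"
      by (rule power2_less_imp_less) (use r Qb in simp)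
    then have "norm (fy y - Phi (X y)) * Qb < r / (2 * Qb) * Qb"
      using Qb(1) by (rule mult_strict_right_mono)
    also have "r / (2 * Qb) * Qb = r / 2" using Qb(1) by simp
    finally have lt: "norm (fy y - Phi (X y)) * Qb < r / 2" .
    have "norm (y - g y) = norm (Q (fy y - Phi (X y)))" using eq by simp
    also have "\<dots> \<le> norm (fy y - Phi (X y)) * Qb" by (rule Qb(2))
    finally show ?thesis using lt by linarith
  qed
  have sub: "ball 0 (r/2) \<subseteq> g ` cball 0 r"
  proof
    fix z :: "real^('w option)" assume z: "z \<in> ball 0 (r/2)"
    have "\<exists>y\<in>cball 0 r. g y = z"
    proof (rule brouwer_surjective_cball[OF continuous_on_subset[OF cg] r z])
      fix x y :: "real^('w option)" assume x: "x \<in> ball 0 (r/2)" and y: "y \<in> cball 0 r"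
      have "norm (x + (y - g y)) \<le> norm x + norm (y - g y)" by (rule norm_triangle_ineq)
      also have "\<dots> < r/2 + r/2" using x gclose[OF y] by (intro add_strict_mono) auto
      finally show "x + (y - g y) \<in> cball 0 r" by simp
    qed auto
    then show "z \<in> g ` cball 0 r" by auto
  qed
  define h where "h x = Q (Phi x - f0)" for x
  have gh: "g ` cball 0 r \<subseteq> range h" by (auto simp: g_def h_def)
  have negh: "negligible (range h)"
  proof (rule negligible_differentiable_image_lowdim)
    show "DIM(real^'w) < DIM(real^('w option))" by (simp add: card_option_UNIV)
    show "h differentiable_on UNIV"
    proof (rule differentiable_at_imp_differentiable_on)
      fix x :: "real^'w"
      have "((\<lambda>x. Phi x - f0) has_derivative blinfun_apply (Phi' x)) (at x)"
        using deriv[of x] by (auto intro!: derivative_eq_intros)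
      then have "(h has_derivative (\<lambda>v. Q (blinfun_apply (Phi' x) v))) (at x)"
        unfolding h_def by (rule bounded_linear.has_derivative[OF blQ])
      then show "h differentiable at x" by (auto simp: differentiable_def)
    qed
  qed
  have "ball (0::real^('w option)) (r/2) \<subseteq> range h" using sub gh by (rule order_trans)
  then have "negligible (ball (0::real^('w option)) (r/2))" by (rule negligible_subset[OF negh])
  moreover have "\<not> negligible (ball (0::real^('w option)) (r/2))"
    using r by (intro open_not_negligible) auto
  ultimately show False by blast
qed

end

theorem corollary1:
  fixes Phi :: "real^'w \<Rightarrow> 'h::{real_inner, complete_space}"
    and Phi' :: "real^'w \<Rightarrow> ((real^'w) \<Rightarrow>\<^sub>L 'h)"
  assumes dim: "\<exists>S::'h set. independent S \<and> finite S \<and> card S = CARD('w) + 1"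
    and deriv: "\<And>x. (Phi has_derivative blinfun_apply (Phi' x)) (at x)"
    and lip: "\<exists>L. L-lipschitz_on UNIV Phi'"
  shows "closure (UNIV - gf_learnable Phi) = UNIV"
proof -
  obtain L where L: "L-lipschitz_on UNIV Phi'" using lip by blast
  interpret gfset Phi Phi' L using deriv L by unfold_locales
  obtain E :: "real^('w option) \<Rightarrow> 'h" and Q :: "'h \<Rightarrow> real^('w option)"
    where EQ: "linear E" "bounded_linear Q" "\<And>y. Q (E y) = y"
    using embed_exists[OF dim] by blast
  have "f0 \<in> closure (UNIV - gf_learnable Phi)" for f0
  proof (rule ccontr)
    assume "f0 \<notin> closure (UNIV - gf_learnable Phi)"
    then obtain \<epsilon> where e: "0 < \<epsilon>" and ne: "\<forall>y\<in>UNIV - gf_learnable Phi. \<not> dist y f0 < \<epsilon>"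
      unfolding closure_approachable by auto
    have "\<And>f. dist f f0 < \<epsilon> \<Longrightarrow> f \<in> gf_learnable Phi" using ne by blast
    then show False by (rule main_contra[OF e _ EQ])
  qed
  then show ?thesis by auto
qed

end
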